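(* Assume the abstract framework described in the context. Let $f\in\mathcal{D}_2$. Then the element $$\mathbf{D}^{B}_\Omega f := -F|_\Omega + \big(\Pi^L(L(\mathbf{1}_\Omega F))\big)|_\Omega\in\mathcal{H}_2^\Omega$$ does not depend on the choice of $F\in\mathcal{H}_2$ with $\operatorname{Tr}_2F=f$; likewise $\mathbf{D}^{B}_{\mathcal{C}} f := -F|_{\mathcal{C}} + \big(\Pi^L(L(\mathbf{1}_{\mathcal{C}} F))\big)|_{\mathcal{C}}\in\mathcal{H}_2^{\mathcal{C}}$ does not depend on this choice. Moreover, for all $f\in\mathcal{D}_2$ and $g\in\mathcal{N}_2$, $$\|\mathbf{D}^{B}_\Omega f\|_{\mathcal{H}_2^\Omega}\le \frac{\|B^{\mathcal{C}}\|}{\lambda}\|f\|_{\mathcal{D}_2},\qquad \|\mathbf{D}^{B}_{\mathcal{C}} f\|_{\mathcal{H}_2^{\mathcal{C}}}\le \frac{\|B^{\Omega}\|}{\lambda}\|f\|_{\mathcal{D}_2},\qquad \|\mathbf{S}^L_\Omega g\|_{\mathcal{H}_2}\le \frac{1}{\lambda}\|g\|_{\mathcal{N}_2},$$ where $\|B^\Omega\|$, $\|B^{\mathcal C}\|$ denote the bounds (norms) of the bounded bilinear forms $B^\Omega$, $B^{\mathcal C}$.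
   Context: Abstract framework. Let $\mathcal{H}_1,\mathcal{H}_2$ be complex Hilbert spaces, and for $j=1,2$ let $\widehat{\mathcal{H}}_j^\Omega$, $\widehat{\mathcal{H}}_j^{\mathcal{C}}$, $\widehat{\mathcal{D}}_j$ be normed (or seminormed) vector spaces. We are given bounded linear operators $\operatorname{Tr}_j:\mathcal{H}_j\to\widehat{\mathcal{D}}_j$ and bounded linear "restriction" operators $F\mapsto F|_\Omega$ from $\mathcal{H}_j$ to $\widehat{\mathcal{H}}_j^\Omega$ and $F\mapsto F|_{\mathcal{C}}$ from $\mathcal{H}_j$ to $\widehat{\mathcal{H}}_j^{\mathcal{C}}$. Define $\mathcal{H}_j^\Omega=\{F|_\Omega:F\in\mathcal{H}_j\}$ with norm $\|f\|_{\mathcal{H}_j^\Omega}=\inf\{\|F\|_{\mathcal{H}_j}:F|_\Omega=f\}$, similarly $\mathcal{H}_j^{\mathcal{C}}$, and $\mathcal{D}_j=\{\operatorname{Tr}_jF:F\in\mathcal{H}_j\}$ with norm $\|f\|_{\mathcal{D}_j}=\inf\{\|F\|_{\mathcal{H}_j}:\operatorname{Tr}_jF=f\}$ (each modulo elements of norm zero). Let $\mathcal{N}_2=\mathcal{D}_1^*$ and $\mathcal{N}_1=\mathcal{D}_2^*$ be the dual spaces, $\langle\cdot,\cdot\rangle$ denoting duality pairings. We are given bounded bilinear forms $B:\mathcal{H}_1\times\mathcal{H}_2\to\mathbb{C}$, $B^\Omega:\mathcal{H}_1^\Omega\times\mathcal{H}_2^\Omega\to\mathbb{C}$, $B^{\mathcal{C}}:\mathcal{H}_1^{\mathcal{C}}\times\mathcal{H}_2^{\mathcal{C}}\to\mathbb{C}$,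 and there is $\lambda>0$ such that for all $u\in\mathcal{H}_1$, $v\in\mathcal{H}_2$, and all $\varphi,\psi\in\mathcal{H}_j$ ($j\in\{1,2\}$): (i) $\sup_{w\in\mathcal{H}_1\setminus\{0\}}|B(w,v)|/\|w\|_{\mathcal{H}_1}\ge\lambda\|v\|_{\mathcal{H}_2}$ and $\sup_{w\in\mathcal{H}_2\setminus\{0\}}|B(u,w)|/\|w\|_{\mathcal{H}_2}\ge\lambda\|u\|_{\mathcal{H}_1}$; (ii) $B(u,v)=B^\Omega(u|_\Omega,v|_\Omega)+B^{\mathcal{C}}(u|_{\mathcal{C}},v|_{\mathcal{C}})$; (iii) if $\operatorname{Tr}_j\varphi=\operatorname{Tr}_j\psi$ then there is $w\in\mathcal{H}_j$ with $w|_\Omega=\varphi|_\Omega$, $w|_{\mathcal{C}}=\psi|_{\mathcal{C}}$ and $\operatorname{Tr}_jw=\operatorname{Tr}_j\varphi$. Definitions: for $u\in\mathcal{H}_2$, $Lu\in\mathcal{H}_1^*$ is given by $\langle\varphi,Lu\rangle=B(\varphi,u)$. For $u\in\mathcal{H}_2^\Omega$, $L(u\mathbf{1}_\Omega)\in\mathcal{H}_1^*$ is given by $\langle\varphi,L(u\mathbf{1}_\Omega)\rangle=B^\Omega(\varphi|_\Omega,u)$ for all $\varphi\in\mathcal{H}_1$; for $F\in\mathcal H_2$, $L(\mathbf 1_\Omega F)$ means $L(F|_\Omega\mathbf 1_\Omega)$; analogously $L(u\mathbf{1}_{\mathcal{C}})$ with $B^{\mathcal{C}}$. Newton potential: for $H\in\mathcal{H}_1^*$,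 $\Pi^LH$ is the unique element of $\mathcal{H}_2$ with $B(\varphi,\Pi^LH)=\langle\varphi,H\rangle$ for all $\varphi\in\mathcal{H}_1$ (it exists uniquely by the Babuška–Lax–Milgram theorem). Single layer potential: for $g\in\mathcal{N}_2$, $\mathbf{S}^L_\Omega g$ is the unique element of $\mathcal{H}_2$ with $B(\varphi,\mathbf{S}^L_\Omega g)=\langle\operatorname{Tr}_1\varphi,g\rangle$ for all $\varphi\in\mathcal{H}_1$. *)

theory Defs
  imports "HOL-Analysis.Analysis"
begin

class complex_vector = real_vector +
  fixes scaleC :: "complex \<Rightarrow> 'a \<Rightarrow> 'a"
  assumes scaleC_add_right: "scaleC a (x + y) = scaleC a x + scaleC a y"
    and scaleC_add_left: "scaleC (a + b) x = scaleC a x + scaleC b x"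
    and scaleC_scaleC: "scaleC a (scaleC b x) = scaleC (a * b) x"
    and scaleC_one: "scaleC 1 x = x"
    and scaleR_scaleC: "scaleR r x = scaleC (complex_of_real r) x"

instantiation complex :: complex_vector
begin
definition scaleC_complex_def: "scaleC a (z::complex) = a * z"
instance
  by standard (auto simp: scaleC_complex_def algebra_simps scaleR_conv_of_real)
end

class complex_inner = complex_vector + real_normed_vector +
  fixes cinner :: "'a \<Rightarrow> 'a \<Rightarrow> complex"
  assumes cinner_add_left: "cinner (x + y) z = cinner x z + cinner y z"
    and cinner_scaleC_left: "cinner (scaleC a x) y = a * cinner x y"
    and cinner_commute: "cinner x y = cnj (cinner y x)"
    and norm_eq_sqrt_cinner: "norm x = sqrt (Re (cinner x x))"

class chilbert_space = complex_inner + complete_space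

definition clinear :: "('a::complex_vector \<Rightarrow> 'b::complex_vector) \<Rightarrow> bool" where
  "clinear f \<longleftrightarrow> (\<forall>x y. f (x + y) = f x + f y) \<and> (\<forall>c x. f (scaleC c x) = scaleC c (f x))"

definition seminorm :: "('a::complex_vector \<Rightarrow> real) \<Rightarrow> bool" where
  "seminorm N \<longleftrightarrow> (\<forall>x y. N (x + y) \<le> N x + N y) \<and> (\<forall>c x. N (scaleC c x) = cmod c * N x)"

definition bounded_clinear_into :: "('b::complex_vector \<Rightarrow> real) \<Rightarrow> ('a::{complex_vector,real_normed_vector} \<Rightarrow> 'b) \<Rightarrow> bool" where
  "bounded_clinear_into N T \<longleftrightarrow> clinear T \<and> (\<exists>K. \<forall>x. N (T x) \<le> K * norm x)"

definition qnorm :: "('a::real_normed_vector \<Rightarrow> 'b) \<Rightarrow> 'b \<Rightarrow> real" where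
  "qnorm T y = Inf {norm F | F. T F = y}"

definition bilinear_on :: "'a::complex_vector set \<Rightarrow> 'b::complex_vector set \<Rightarrow> ('a \<Rightarrow> 'b \<Rightarrow> complex) \<Rightarrow> bool" where
  "bilinear_on A C f \<longleftrightarrow>
     (\<forall>u\<in>A. \<forall>u'\<in>A. \<forall>v\<in>C. f (u + u') v = f u v + f u' v) \<and>
     (\<forall>u\<in>A. \<forall>v\<in>C. \<forall>c. f (scaleC c u) v = c * f u v) \<and>
     (\<forall>u\<in>A. \<forall>v\<in>C. \<forall>v'\<in>C. f u (v + v') = f u v + f u v') \<and>
     (\<forall>u\<in>A. \<forall>v\<in>C. \<forall>c. f u (scaleC c v) = c * f u v)"

definition bilin_bounded :: "'a set \<Rightarrow> 'b set \<Rightarrow> ('a \<Rightarrow> real) \<Rightarrow> ('b \<Rightarrow> real) \<Rightarrow> ('a \<Rightarrow> 'b \<Rightarrow> complex) \<Rightarrow> bool" where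
  "bilin_bounded A C nA nC f \<longleftrightarrow> (\<exists>K. \<forall>u\<in>A. \<forall>v\<in>C. cmod (f u v) \<le> K * nA u * nC v)"

definition bilin_norm :: "'a set \<Rightarrow> 'b set \<Rightarrow> ('a \<Rightarrow> real) \<Rightarrow> ('b \<Rightarrow> real) \<Rightarrow> ('a \<Rightarrow> 'b \<Rightarrow> complex) \<Rightarrow> real" where
  "bilin_norm A C nA nC f = Inf {K. 0 \<le> K \<and> (\<forall>u\<in>A. \<forall>v\<in>C. cmod (f u v) \<le> K * nA u * nC v)}"

definition in_dual :: "'a::complex_vector set \<Rightarrow> ('a \<Rightarrow> real) \<Rightarrow> ('a \<Rightarrow> complex) \<Rightarrow> bool" where
  "in_dual D nD g \<longleftrightarrow>
     (\<forall>x\<in>D. \<forall>y\<in>D. g (x + y) = g x + g y) \<and> (\<forall>x\<in>D. \<forall>c. g (scaleC c x) = c * g x) \<and>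
     (\<exists>K. \<forall>x\<in>D. cmod (g x) \<le> K * nD x)"

definition dual_norm :: "'a set \<Rightarrow> ('a \<Rightarrow> real) \<Rightarrow> ('a \<Rightarrow> complex) \<Rightarrow> real" where
  "dual_norm D nD g = Inf {K. 0 \<le> K \<and> (\<forall>x\<in>D. cmod (g x) \<le> K * nD x)}"

definition newton_pot :: "('h1 \<Rightarrow> 'h2 \<Rightarrow> complex) \<Rightarrow> ('h1 \<Rightarrow> complex) \<Rightarrow> 'h2" where
  "newton_pot B H = (THE u. \<forall>\<phi>. B \<phi> u = H \<phi>)"

text \<open>\<open>L(u 1\<^sub>\<Omega>)\<close> for \<open>u\<close> in the restricted space: \<open>\<phi> \<mapsto> B\<^sup>\<Omega>(\<phi>|\<^sub>\<Omega>, u)\<close>.\<close>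
definition L_ind :: "('o1 \<Rightarrow> 'o2 \<Rightarrow> complex) \<Rightarrow> ('h1 \<Rightarrow> 'o1) \<Rightarrow> 'o2 \<Rightarrow> 'h1 \<Rightarrow> complex" where
  "L_ind BO r1 u = (\<lambda>\<phi>. BO (r1 \<phi>) u)"

text \<open>\<open>D\<^sup>B f := -F| + (\<Pi>\<^sup>L (L(1 F)))|\<close>, computed from a representative \<open>F\<close> with \<open>Tr\<^sub>2 F = f\<close>.\<close>
definition DB_rep :: "('h1 \<Rightarrow> 'h2 \<Rightarrow> complex) \<Rightarrow> ('o1 \<Rightarrow> 'o2::group_add \<Rightarrow> complex) \<Rightarrow>
     ('h1 \<Rightarrow> 'o1) \<Rightarrow> ('h2 \<Rightarrow> 'o2) \<Rightarrow> 'h2 \<Rightarrow> 'o2" where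
  "DB_rep B BO r1 r2 F = - r2 F + r2 (newton_pot B (L_ind BO r1 (r2 F)))"

definition single_layer :: "('h1 \<Rightarrow> 'h2 \<Rightarrow> complex) \<Rightarrow> ('h1 \<Rightarrow> 'd1) \<Rightarrow> ('d1 \<Rightarrow> complex) \<Rightarrow> 'h2" where
  "single_layer B Tr1 g = newton_pot B (\<lambda>\<phi>. g (Tr1 \<phi>))"

end

theory Submission
  imports Defs
begin

lemma scaleC_zero_left[simp]: "scaleC 0 (x::'a::complex_vector) = 0"
proof -
  have "scaleR 0 x = scaleC (complex_of_real 0) x" by (rule scaleR_scaleC)
  thus ?thesis by simp
qed
lemma scaleC_minus1: "scaleC (-1) (x::'a::complex_vector) = - x"
  by (metis scaleR_scaleC scaleR_minus1_left of_real_minus of_real_1)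
lemma scaleC_zero_right[simp]: "scaleC a (0::'a::complex_vector) = 0"
  by (metis add_cancel_right_right scaleC_add_right)
lemma scaleC_minus_right: "scaleC a (- x) = - scaleC a (x::'a::complex_vector)"
  by (metis scaleC_minus1 scaleC_scaleC mult.commute)
lemma scaleC_diff_right: "scaleC a (x - y) = scaleC a x - scaleC a (y::'a::complex_vector)"
  by (simp only: scaleC_add_right scaleC_minus_right diff_conv_add_uminus)

lemma cinner_zero_left[simp]: "cinner 0 y = 0"
  by (metis scaleC_zero_left cinner_scaleC_left mult_zero_left)
lemma cinner_add_right: "cinner x (y + z) = cinner x y + cinner x z"
  by (metis cinner_commute cinner_add_left complex_cnj_add)
lemma cinner_scaleC_right: "cinner x (scaleC a y) = cnj a * cinner x y"
  by (metis cinner_commute cinner_scaleC_left complex_cnj_mult complex_cnj_cnj)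
lemma cinner_zero_right[simp]: "cinner x 0 = 0"
  by (metis cinner_commute cinner_zero_left complex_cnj_zero)
lemma cinner_minus_left: "cinner (- x) y = - cinner x y"
  by (metis scaleC_minus1 cinner_scaleC_left mult_minus1)
lemma cinner_minus_right: "cinner x (- y) = - cinner x y"
  by (metis cinner_commute cinner_minus_left complex_cnj_minus)
lemma cinner_diff_left: "cinner (x - y) z = cinner x z - cinner y z"
  by (simp only: cinner_add_left cinner_minus_left diff_conv_add_uminus)
lemma cinner_diff_right: "cinner x (y - z) = cinner x y - cinner x z"
  by (simp only: cinner_add_right cinner_minus_right diff_conv_add_uminus)
lemma cinner_self_real: "cinner x x = complex_of_real ((norm x)^2)"
proof -
  have im: "Im (cinner x x) = 0" using cinner_commute[of x x]
    by (metis Im_complex_of_real Reals_cnj_iff complex_is_Real_iff)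
  have "Re (cinner x x) \<ge> 0"
    by (metis norm_eq_sqrt_cinner norm_ge_zero real_sqrt_ge_zero real_sqrt_lt_0_iff not_le)
  hence "Re (cinner x x) = (norm x)^2" using norm_eq_sqrt_cinner[of x] by simp
  thus ?thesis using im by (simp add: complex_eq_iff)
qed
lemma norm_sq_expand: "(norm (x + y))^2 = (norm x)^2 + (norm y)^2 + 2 * Re (cinner x y)"
proof -
  have "cinner (x+y) (x+y) = cinner x x + cinner x y + cinner y x + cinner y y"
    by (simp add: cinner_add_left cinner_add_right)
  hence "Re (cinner (x+y) (x+y)) = Re (cinner x x) + Re (cinner y y) + 2 * Re (cinner x y)"
    using cinner_commute[of y x] by simp
  thus ?thesis by (simp add: cinner_self_real)
qed
lemma norm_scaleC: "norm (scaleC a (x::'a::complex_inner)) = cmod a * norm x"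
proof -
  have "cinner (scaleC a x) (scaleC a x) = a * cnj a * cinner x x"
    by (simp add: cinner_scaleC_left cinner_scaleC_right mult.assoc)
  also have "\<dots> = complex_of_real ((cmod a)^2 * (norm x)^2)"
    by (simp only: complex_mult_cnj cinner_self_real of_real_mult cmod_power2)
  finally have "complex_of_real ((norm (scaleC a x))^2) = complex_of_real ((cmod a)^2 * (norm x)^2)"
    by (simp add: cinner_self_real)
  hence "(norm (scaleC a x))^2 = (cmod a * norm x)^2"
    by (simp only: of_real_eq_iff power_mult_distrib)
  thus ?thesis by (rule power2_eq_imp_eq) simp_all
qed
lemma cinner_eq_zero_self: "cinner x x = 0 \<longleftrightarrow> x = 0"
  by (simp add: cinner_self_real)
lemma quad_expand:
  fixes s :: real
  shows "(norm (z - scaleC (complex_of_real s * cinner z m) m))^2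
     = (norm z)^2 - 2 * s * (cmod (cinner z m))^2 + s^2 * (cmod (cinner z m))^2 * (norm m)^2"
proof -
  let ?t = "complex_of_real s * cinner z m"
  have e: "z - scaleC ?t m = z + scaleC (- ?t) m"
    by (metis diff_conv_add_uminus scaleC_minus1 scaleC_scaleC mult_minus1)
  have r: "Re (cinner z (scaleC (- ?t) m)) = - s * (cmod (cinner z m))^2"
    apply (simp add: cinner_scaleC_right cmod_power2)
    by (simp add: power2_eq_square algebra_simps)
  have n: "norm (scaleC (- ?t) m) = \<bar>s\<bar> * cmod (cinner z m) * norm m"
    by (simp add: norm_scaleC norm_mult)
  show ?thesis unfolding e norm_sq_expand r n by (simp add: power_mult_distrib power2_abs)
qed
lemma cauchy_schwarz: "cmod (cinner x y) \<le> norm x * norm y"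
proof (cases "y = 0")
  case True thus ?thesis by simp
next
  case False
  hence ny: "norm y > 0" by simp
  have "0 \<le> (norm (x - scaleC (complex_of_real (1/(norm y)^2) * cinner x y) y))^2" by simp
  also have "\<dots> = (norm x)^2 - (cmod (cinner x y))^2 / (norm y)^2"
    unfolding quad_expand using ny by (simp add: field_simps power2_eq_square)
  finally have "(cmod (cinner x y))^2 \<le> (norm x * norm y)^2"
    using ny by (simp add: field_simps power_mult_distrib)
  thus ?thesis by (simp add: power_mono_iff)
qed

lemma parallelogram:
  fixes a b :: "'a::complex_inner"
  shows "(norm (a - b))^2 + (norm (a + b))^2 = 2 * (norm a)^2 + 2 * (norm b)^2"
proof -
  have "(norm (a + - b))^2 = (norm a)^2 + (norm b)^2 - 2 * Re (cinner a b)"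
    using norm_sq_expand[of a "-b"] by (simp add: cinner_minus_right)
  thus ?thesis using norm_sq_expand[of a b] by simp
qed

lemma projection_exists:
  fixes M :: "'a::chilbert_space set"
  assumes cl: "closed M" and ne: "M \<noteq> {}"
    and addM: "\<And>a b. a \<in> M \<Longrightarrow> b \<in> M \<Longrightarrow> a + b \<in> M"
    and scM: "\<And>a c. a \<in> M \<Longrightarrow> scaleC c a \<in> M"
  shows "\<exists>p\<in>M. \<forall>m\<in>M. cinner (x - p) m = 0"
proof -
  have scR: "scaleR r a \<in> M" if "a \<in> M" for r a
    using scM[OF that] by (simp add: scaleR_scaleC)
  define S where "S = (\<lambda>m. norm (x - m)) ` M"
  define d where "d = Inf S"
  have Sne: "S \<noteq> {}" using ne by (simp add: S_def)
  have bdd: "bdd_below S" unfolding S_def by (rule bdd_belowI[of _ 0]) auto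
  have dle: "d \<le> norm (x - m)" if "m \<in> M" for m
    unfolding d_def S_def using bdd that by (auto simp: S_def intro!: cInf_lower)
  have d0: "0 \<le> d" unfolding d_def using Sne by (auto simp: S_def intro!: cInf_greatest)
  define e where "e = (\<lambda>n::nat. 1 / real (Suc n))"
  have epos: "e n > 0" for n by (simp add: e_def)
  have "\<exists>m\<in>M. norm (x - m) < d + e n" for n
  proof -
    have "Inf S < d + e n" using epos[of n] by (simp add: d_def)
    then obtain y where "y \<in> S" "y < d + e n" using cInf_lessD[OF Sne] by blast
    thus ?thesis by (auto simp: S_def)
  qed
  then obtain mm where mmM: "\<And>n. mm n \<in> M" and mmd: "\<And>n. norm (x - mm n) < d + e n"
    by metis
  have key: "(norm (mm n - mm k))^2 \<le> 2 * (d + e n)^2 + 2 * (d + e k)^2 - 4 * d^2" for n k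
  proof -
    define a where "a = x - mm n"
    define b where "b = x - mm k"
    define w where "w = scaleR (1/2) (mm n + mm k)"
    have wM: "w \<in> M" unfolding w_def by (intro scR addM mmM)
    have ab: "a + b = scaleR 2 (x - w)" unfolding a_def b_def w_def
      by (simp add: algebra_simps scaleR_2)
    have "2 * d \<le> norm (a + b)" unfolding ab using dle[OF wM] by simp
    hence "(2 * d)^2 \<le> (norm (a + b))^2" using d0 by (intro power_mono) auto
    hence s1: "4 * d^2 \<le> (norm (a + b))^2" by (simp add: power_mult_distrib)
    have s2: "(norm a)^2 \<le> (d + e n)^2" unfolding a_def
      using mmd[of n] by (intro power_mono) auto
    have s3: "(norm b)^2 \<le> (d + e k)^2" unfolding b_def
      using mmd[of k] by (intro power_mono) auto
    have "a - b = mm k - mm n" unfolding a_def b_def by simp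
    hence "(norm (mm n - mm k))^2 = (norm (a - b))^2" by (simp add: norm_minus_commute)
    thus ?thesis using parallelogram[of a b] s1 s2 s3 by linarith
  qed
  have cauchy: "Cauchy mm"
  proof (unfold Cauchy_def, intro allI impI)
    fix \<epsilon> :: real assume ep: "\<epsilon> > 0"
    define \<delta> where "\<delta> = min 1 (\<epsilon>^2 / (8 * d + 5))"
    have dpos: "\<delta> > 0" using ep d0 by (simp add: \<delta>_def)
    obtain N where N: "inverse (real (Suc N)) < \<delta>" using reals_Archimedean[OF dpos] by blast
    have eN: "e n < \<delta>" if "n \<ge> N" for n
    proof -
      have "e n \<le> inverse (real (Suc N))" unfolding e_def using that
        by (simp add: field_simps)
      thus ?thesis using N by linarith
    qed
    show "\<exists>N. \<forall>m\<ge>N. \<forall>n\<ge>N. dist (mm m) (mm n) < \<epsilon>"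
    proof (intro exI allI impI)
      fix n k assume "n \<ge> N" "k \<ge> N"
      hence en: "e n < \<delta>" and ek: "e k < \<delta>" using eN by auto
      have en0: "0 < e n" and ek0: "0 < e k" using epos by auto
      have d1: "\<delta> \<le> 1" and d2: "\<delta> \<le> \<epsilon>^2 / (8 * d + 5)" by (auto simp: \<delta>_def)
      have "2 * (d + e n)^2 + 2 * (d + e k)^2 - 4 * d^2
              = 4 * d * (e n + e k) + 2 * (e n)^2 + 2 * (e k)^2"
        by (simp add: power2_eq_square algebra_simps)
      also have "\<dots> \<le> 4 * d * (2 * \<delta>) + 2 * \<delta> + 2 * \<delta>"
      proof -
        have "(e n)^2 \<le> \<delta>"
        proof -
          have "(e n)^2 \<le> \<delta>^2" using en en0 by (intro power_mono) auto
          moreover have "\<delta> * \<delta> \<le> \<delta> * 1" using d1 dpos by (intro mult_left_mono) auto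
          ultimately show ?thesis by (simp add: power2_eq_square)
        qed
        moreover have "(e k)^2 \<le> \<delta>"
        proof -
          have "(e k)^2 \<le> \<delta>^2" using ek ek0 by (intro power_mono) auto
          moreover have "\<delta> * \<delta> \<le> \<delta> * 1" using d1 dpos by (intro mult_left_mono) auto
          ultimately show ?thesis by (simp add: power2_eq_square)
        qed
        moreover have "4 * d * (e n + e k) \<le> 4 * d * (2 * \<delta>)" using en ek d0
          by (intro mult_left_mono) auto
        ultimately show ?thesis by linarith
      qed
      also have "\<dots> = (8 * d + 4) * \<delta>" by (simp add: algebra_simps)
      also have "\<dots> < (8 * d + 5) * \<delta>" using dpos by (simp add: mult_strict_right_mono)
      also have "\<dots> \<le> \<epsilon>^2" using d2 d0 by (simp add: field_simps)
      finally have "(norm (mm n - mm k))^2 < \<epsilon>^2" using key[of n k] by linarith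
      thus "dist (mm n) (mm k) < \<epsilon>" using ep by (simp add: dist_norm power_less_imp_less_base)
    qed
  qed
  then obtain p where lim: "mm \<longlonglongrightarrow> p" using Cauchy_convergent convergent_def by blast
  have pM: "p \<in> M" using cl mmM lim closed_sequential_limits by blast
  have pmin: "norm (x - p) \<le> d"
  proof (rule field_le_epsilon)
    fix \<epsilon> :: real assume ep: "0 < \<epsilon>"
    obtain n1 where n1: "\<And>n. n \<ge> n1 \<Longrightarrow> norm (mm n - p) < \<epsilon>/2"
      using lim ep unfolding LIMSEQ_iff by (metis half_gt_zero)
    obtain n2 where n2: "inverse (real (Suc n2)) < \<epsilon>/2" using reals_Archimedean ep
      by (metis half_gt_zero)
    define n where "n = max n1 n2"
    have "e n \<le> inverse (real (Suc n2))" unfolding e_def n_def by (simp add: field_simps)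
    hence "e n < \<epsilon>/2" using n2 by linarith
    moreover have "norm (mm n - p) < \<epsilon>/2" using n1 by (simp add: n_def)
    moreover have "norm (x - p) \<le> norm (x - mm n) + norm (mm n - p)"
      using norm_triangle_ineq[of "x - mm n" "mm n - p"] by simp
    ultimately show "norm (x - p) \<le> d + \<epsilon>" using mmd[of n] by linarith
  qed
  have orth: "cinner (x - p) m = 0" if mM: "m \<in> M" for m
  proof -
    define z where "z = x - p"
    define c where "c = cinner z m"
    define s where "s = 1 / ((norm m)^2 + 1)"
    have m1: "(norm m)^2 + 1 > 0" by (simp add: add_nonneg_pos)
    have spos: "s > 0" using m1 by (simp add: s_def)
    have "p + scaleC (complex_of_real s * c) m \<in> M" by (intro addM pM scM mM)
    hence "norm z \<le> norm (z - scaleC (complex_of_real s * c) m)"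
      using pmin dle unfolding z_def by (metis diff_diff_add order_trans)
    hence "(norm z)^2 \<le> (norm (z - scaleC (complex_of_real s * c) m))^2"
      by (intro power_mono) auto
    hence "2 * s * (cmod c)^2 \<le> s^2 * (cmod c)^2 * (norm m)^2"
      unfolding c_def quad_expand by simp
    hence "2 * (cmod c)^2 \<le> s * (cmod c)^2 * (norm m)^2"
      using spos by (simp add: power2_eq_square field_simps)
    also have "\<dots> = (cmod c)^2 * ((norm m)^2 / ((norm m)^2 + 1))"
      by (simp add: s_def field_simps)
    also have "\<dots> \<le> (cmod c)^2 * 1"
      using m1 by (intro mult_left_mono) (auto simp: divide_le_eq_1)
    finally have "(cmod c)^2 \<le> 0" by simp
    thus ?thesis by (simp add: c_def z_def)
  qed
  show ?thesis using pM orth by blast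
qed


lemma lin_diff:
  fixes H :: "'a::complex_vector \<Rightarrow> complex"
  assumes add: "\<And>x y. H (x+y) = H x + H y" and sc: "\<And>c x. H (scaleC c x) = c * H x"
  shows "H (x - y) = H x - H y"
proof -
  have "H (x - y) = H (x + scaleC (-1) y)" by (simp add: scaleC_minus1)
  thus ?thesis by (simp add: add sc)
qed

lemma riesz:
  fixes H :: "'a::chilbert_space \<Rightarrow> complex"
  assumes add: "\<And>x y. H (x+y) = H x + H y" and sc: "\<And>c x. H (scaleC c x) = c * H x"
    and bd: "\<And>x. cmod (H x) \<le> K * norm x"
  shows "\<exists>h. \<forall>x. H x = cinner x h"
proof (cases "\<forall>x. H x = 0")
  case True thus ?thesis by (intro exI[of _ 0]) simp
next
  case False
  then obtain x0 where hx0: "H x0 \<noteq> 0" by blast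
  define N where "N = {x. H x = 0}"
  have H0: "H 0 = 0" using sc[of 0 0] by simp
  have clN: "closed N"
  proof (unfold closed_sequential_limits, intro allI impI, elim conjE)
    fix xs l assume xsN: "\<forall>n. xs n \<in> N" and lim: "xs \<longlonglongrightarrow> l"
    have eps: "cmod (H l) \<le> \<epsilon>" if ep: "\<epsilon> > 0" for \<epsilon>
    proof -
      have kp: "\<bar>K\<bar> + 1 > 0" by simp
      obtain n where n: "norm (xs n - l) < \<epsilon> / (\<bar>K\<bar> + 1)"
        using lim ep kp unfolding LIMSEQ_iff by (meson divide_pos_pos order_refl)
      have "H l = H l - H (xs n)" using xsN by (simp add: N_def)
      also have "\<dots> = H (l - xs n)" using lin_diff[OF add sc] by simp
      finally have "cmod (H l) \<le> K * norm (l - xs n)" using bd by simp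
      also have "\<dots> \<le> \<bar>K\<bar> * norm (xs n - l)" by (simp add: norm_minus_commute mult_right_mono)
      also have "\<dots> \<le> \<bar>K\<bar> * (\<epsilon> / (\<bar>K\<bar> + 1))" using n by (intro mult_left_mono) auto
      also have "\<dots> \<le> \<epsilon>" using ep kp by (simp add: field_simps)
      finally show ?thesis .
    qed
    have "cmod (H l) \<le> 0"
      by (rule field_le_epsilon) (simp add: eps)
    thus "l \<in> N" by (simp add: N_def)
  qed
  obtain p where pN: "p \<in> N" and orth: "\<forall>m\<in>N. cinner (x0 - p) m = 0"
    using projection_exists[OF clN, of x0] H0 add sc unfolding N_def by auto
  define z where "z = x0 - p"
  have Hz: "H z = H x0" using pN lin_diff[OF add sc] by (simp add: z_def N_def)
  hence "z \<noteq> 0" using hx0 H0 by auto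
  hence zz: "cinner z z \<noteq> 0" by (simp add: cinner_eq_zero_self)
  define h where "h = scaleC (cnj (H z / cinner z z)) z"
  have "H x = cinner x h" for x
  proof -
    define m where "m = x - scaleC (H x / H z) z"
    have "H m = 0" unfolding m_def using hx0 Hz by (simp add: lin_diff[OF add sc] sc)
    hence "cinner z m = 0" using orth by (simp add: N_def z_def)
    hence "cinner m z = 0" by (metis cinner_commute complex_cnj_zero)
    hence "cinner x z = (H x / H z) * cinner z z"
      by (simp add: m_def cinner_diff_left cinner_scaleC_left)
    thus ?thesis using zz hx0 Hz by (simp add: h_def cinner_scaleC_right)
  qed
  thus ?thesis by blast
qed

lemma SUP_le_const:
  fixes f :: "'a \<Rightarrow> real"
  assumes "\<And>w. f w \<le> M"
  shows "(SUP w. f w) \<le> M"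
  using assms by (intro cSUP_least) auto

lemma bil_diff2:
  assumes "bilinear_on UNIV UNIV B"
  shows "B x (u - v) = B x u - B x (v::'b::complex_vector)"
proof -
  have "B x (u - v) = B x (u + scaleC (-1) v)" by (simp add: scaleC_minus1)
  thus ?thesis using assms unfolding bilinear_on_def by simp
qed

lemma bil_diff1:
  assumes "bilinear_on UNIV UNIV B"
  shows "B (u - v) x = B u x - B (v::'a::complex_vector) x"
proof -
  have "B (u - v) x = B (u + scaleC (-1) v) x" by (simp add: scaleC_minus1)
  thus ?thesis using assms unfolding bilinear_on_def by simp
qed

lemma infsup_zero:
  fixes B :: "'h1::real_normed_vector \<Rightarrow> 'h2::real_normed_vector \<Rightarrow> complex"
  assumes lam: "lam > 0" and is1: "\<And>v. lam * norm v \<le> (SUP w. cmod (B w v) / norm w)"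
    and z: "\<And>w. B w v = 0"
  shows "v = 0"
proof -
  have "lam * norm v \<le> 0" using is1[of v] SUP_le_const[of "\<lambda>w. cmod (B w v) / norm w" 0] z by simp
  thus ?thesis using lam by (simp add: mult_le_0_iff)
qed

lemma blm:
  fixes B :: "'h1::chilbert_space \<Rightarrow> 'h2::chilbert_space \<Rightarrow> complex"
  assumes bil: "bilinear_on UNIV UNIV B"
    and bdd: "\<And>u v. cmod (B u v) \<le> K * norm u * norm v" and K0: "K \<ge> 0"
    and lam: "lam > 0"
    and is1: "\<And>v. lam * norm v \<le> (SUP w. cmod (B w v) / norm w)"
    and is2: "\<And>u. lam * norm u \<le> (SUP w. cmod (B u w) / norm w)"
    and addH: "\<And>x y. H (x+y) = H x + H y" and scH: "\<And>c x. H (scaleC c x) = c * H x"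
    and bdH: "\<And>x. cmod (H x) \<le> KH * norm x"
  shows "\<exists>u. \<forall>\<phi>. B \<phi> u = H \<phi>"
proof -
  have b1: "B (x + y) v = B x v + B y v" "B (scaleC c x) v = c * B x v"
    and b2: "B x (u + v) = B x u + B x v" "B x (scaleC c u) = c * B x u" for x y u v c
    using bil unfolding bilinear_on_def by auto
  have "\<exists>h. \<forall>\<phi>. B \<phi> u = cinner \<phi> h" for u
    by (rule riesz[where K = "K * norm u"]) (use b1 bdd in \<open>auto simp: mult_ac\<close>)
  then obtain A where A: "\<And>u \<phi>. B \<phi> u = cinner \<phi> (A u)" by metis
  have uniq: "h1 = h2" if "\<And>\<phi>. cinner \<phi> h1 = cinner \<phi> (h2::'h1)" for h1 h2
  proof -
    have "cinner (h1 - h2) (h1 - h2) = 0" using that by (simp add: cinner_diff_right)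
    thus ?thesis by (simp add: cinner_eq_zero_self)
  qed
  have Aadd: "A (u + v) = A u + A v" for u v
    by (rule uniq) (simp add: cinner_add_right A[symmetric] b2)
  have Asc: "A (scaleC c u) = scaleC (cnj c) (A u)" for c u
    by (rule uniq) (simp add: cinner_scaleC_right A[symmetric] b2)
  have Adiff: "A (u - v) = A u - A v" for u v
    by (rule uniq) (simp add: cinner_diff_right A[symmetric] bil_diff2[OF bil])
  have Alow: "lam * norm u \<le> norm (A u)" for u
  proof -
    have "(SUP w. cmod (B w u) / norm w) \<le> norm (A u)"
    proof (rule SUP_le_const)
      fix w
      show "cmod (B w u) / norm w \<le> norm (A u)"
      proof (cases "w = 0")
        case True thus ?thesis by simp
      next
        case False
        have "cmod (B w u) \<le> norm w * norm (A u)" using cauchy_schwarz A by simp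
        thus ?thesis using False by (simp add: field_simps)
      qed
    qed
    thus ?thesis using is1[of u] by linarith
  qed
  have Aup: "norm (A u) \<le> K * norm u" for u
  proof (cases "A u = 0")
    case True thus ?thesis using K0 by simp
  next
    case False
    have "(norm (A u))^2 = Re (cinner (A u) (A u))" by (simp add: cinner_self_real)
    also have "\<dots> \<le> cmod (B (A u) u)" using A by (simp add: complex_Re_le_cmod)
    also have "\<dots> \<le> K * norm (A u) * norm u" by (rule bdd)
    finally have "norm (A u) * norm (A u) \<le> norm (A u) * (K * norm u)"
      by (simp add: power2_eq_square algebra_simps)
    thus ?thesis using False by simp
  qed
  define M where "M = range A"
  have clM: "closed M"
  proof (unfold closed_sequential_limits, intro allI impI, elim conjE)
    fix ys l assume ysM: "\<forall>n. ys n \<in> M" and lim: "ys \<longlonglongrightarrow> l"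
    have "\<forall>n. \<exists>u. ys n = A u" using ysM by (auto simp: M_def)
    then obtain us where us: "\<And>n. ys n = A (us n)" by metis
    have "Cauchy ys" using lim by (rule LIMSEQ_imp_Cauchy)
    have "Cauchy us"
    proof (unfold Cauchy_def, intro allI impI)
      fix \<epsilon> :: real assume ep: "\<epsilon> > 0"
      obtain N where N: "\<And>m n. m \<ge> N \<Longrightarrow> n \<ge> N \<Longrightarrow> dist (ys m) (ys n) < \<epsilon> * lam"
        using \<open>Cauchy ys\<close> ep lam unfolding Cauchy_def by (meson mult_pos_pos)
      show "\<exists>N. \<forall>m\<ge>N. \<forall>n\<ge>N. dist (us m) (us n) < \<epsilon>"
      proof (intro exI allI impI)
        fix m n assume "m \<ge> N" "n \<ge> N"
        hence "norm (A (us m - us n)) < \<epsilon> * lam" using N by (simp add: Adiff us dist_norm)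
        hence "lam * norm (us m - us n) < lam * \<epsilon>" using Alow[of "us m - us n"] by (simp add: mult.commute)
        thus "dist (us m) (us n) < \<epsilon>" using lam by (simp add: dist_norm)
      qed
    qed
    then obtain v where limu: "us \<longlonglongrightarrow> v" using Cauchy_convergent convergent_def by blast
    have "(\<lambda>n. A (us n)) \<longlonglongrightarrow> A v"
    proof (unfold LIMSEQ_iff, intro allI impI)
      fix r :: real assume r: "r > 0"
      obtain n0 where n0: "\<And>n. n \<ge> n0 \<Longrightarrow> norm (us n - v) < r / (K + 1)"
        using limu r K0 unfolding LIMSEQ_iff by (meson divide_pos_pos add_nonneg_pos zero_less_one)
      show "\<exists>no. \<forall>n\<ge>no. norm (A (us n) - A v) < r"
      proof (intro exI allI impI)
        fix n assume "n \<ge> n0"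
        have "norm (A (us n) - A v) \<le> K * norm (us n - v)" using Aup by (simp add: Adiff[symmetric])
        also have "\<dots> \<le> K * (r / (K + 1))" using n0[OF \<open>n \<ge> n0\<close>] K0 by (intro mult_left_mono) auto
        also have "\<dots> < r" using r K0 by (simp add: field_simps)
        finally show "norm (A (us n) - A v) < r" .
      qed
    qed
    moreover have "ys = (\<lambda>n. A (us n))" using us by (intro ext) simp
    ultimately have "ys \<longlonglongrightarrow> A v" by simp
    hence "l = A v" using lim LIMSEQ_unique by blast
    thus "l \<in> M" by (simp add: M_def)
  qed
  obtain h where h: "\<And>x. H x = cinner x h" using riesz[OF addH scH bdH] by blast
  obtain p where pM: "p \<in> M" and orth: "\<forall>m\<in>M. cinner (h - p) m = 0"
  proof -
    have ne: "M \<noteq> {}" by (simp add: M_def)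
    have ad: "a + b \<in> M" if "a \<in> M" "b \<in> M" for a b
      using that by (auto simp: M_def Aadd[symmetric])
    have sc: "scaleC c a \<in> M" if aM: "a \<in> M" for a c
    proof -
      obtain u where "a = A u" using aM by (auto simp: M_def)
      hence "scaleC c a = A (scaleC (cnj c) u)" by (simp add: Asc)
      thus ?thesis by (simp add: M_def)
    qed
    show ?thesis using projection_exists[OF clM ne ad sc, of h] that by blast
  qed
  then obtain u where pu: "p = A u" unfolding M_def by auto
  have "B (h - A u) v = 0" for v using orth by (simp add: A M_def pu)
  hence "h - A u = 0" using infsup_zero[OF lam, of "\<lambda>v w. B w v"] is2 by blast
  hence "h = A u" by simp
  thus ?thesis using A h by auto
qed


lemma qnorm_le: "qnorm T (T F) \<le> norm F"
  unfolding qnorm_def by (rule cInf_lower) (auto intro: bdd_belowI[of _ 0])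

lemma qnorm_nonneg: "0 \<le> qnorm T (T F)"
  unfolding qnorm_def by (rule cInf_greatest) auto

lemma inf_bound:
  fixes S :: "real set"
  assumes "S \<noteq> {}" "\<And>y. y \<in> S \<Longrightarrow> x \<le> c * y" "c \<ge> 0"
  shows "x \<le> c * Inf S"
proof (cases "c = 0")
  case True
  then obtain y where "y \<in> S" using assms by blast
  thus ?thesis using assms True by force
next
  case False
  hence c: "c > 0" using assms by simp
  have "x / c \<le> Inf S" using assms(1)
    by (rule cInf_greatest) (use assms(2) c in \<open>auto simp: field_simps mult.commute\<close>)
  thus ?thesis using c by (simp add: field_simps)
qed

lemma bilin_norm_props:
  assumes bd: "bilin_bounded A C nA nC f"
    and nn: "\<And>u v. u \<in> A \<Longrightarrow> v \<in> C \<Longrightarrow> 0 \<le> nA u * nC v"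
  shows "{K. 0 \<le> K \<and> (\<forall>u\<in>A. \<forall>v\<in>C. cmod (f u v) \<le> K * nA u * nC v)} \<noteq> {}"
    and "0 \<le> bilin_norm A C nA nC f"
    and "\<exists>K\<ge>0. \<forall>u\<in>A. \<forall>v\<in>C. cmod (f u v) \<le> K * nA u * nC v"
proof -
  obtain K where K: "\<forall>u\<in>A. \<forall>v\<in>C. cmod (f u v) \<le> K * nA u * nC v"
    using bd unfolding bilin_bounded_def by blast
  show ne: "{K. 0 \<le> K \<and> (\<forall>u\<in>A. \<forall>v\<in>C. cmod (f u v) \<le> K * nA u * nC v)} \<noteq> {}"
  proof (cases "K \<ge> 0")
    case True thus ?thesis using K by blast
  next
    case False
    have "cmod (f u v) \<le> 0 * nA u * nC v" if uv: "u \<in> A" "v \<in> C" for u v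
    proof -
      have "cmod (f u v) \<le> K * (nA u * nC v)" using K uv by (simp add: mult.assoc)
      moreover have "K * (nA u * nC v) \<le> 0" using False nn[OF uv]
        by (intro mult_nonpos_nonneg) auto
      ultimately have "cmod (f u v) \<le> 0" by linarith
      thus ?thesis by simp
    qed
    thus ?thesis by blast
  qed
  show "0 \<le> bilin_norm A C nA nC f" unfolding bilin_norm_def
    by (rule cInf_greatest[OF ne]) auto
  show "\<exists>K\<ge>0. \<forall>u\<in>A. \<forall>v\<in>C. cmod (f u v) \<le> K * nA u * nC v"
    using ne by blast
qed

lemma qnn: "u \<in> range r1 \<Longrightarrow> v \<in> range r2 \<Longrightarrow> 0 \<le> qnorm r1 u * qnorm r2 v"
  using qnorm_nonneg[where T=r1] qnorm_nonneg[where T=r2] by (auto intro!: mult_nonneg_nonneg)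

lemma clinear_neg:
  assumes "clinear T" shows "T (- x) = - T (x::'a::complex_vector)"
proof -
  have "T (scaleC (-1) x) = scaleC (-1) (T x)" using assms by (simp add: clinear_def)
  thus ?thesis by (simp add: scaleC_minus1)
qed

lemma L_ind_props:
  fixes r1 :: "'h1::chilbert_space \<Rightarrow> 'o1::complex_vector" and r2 :: "'h2::chilbert_space \<Rightarrow> 'o2::complex_vector"
  assumes lin: "clinear r1"
    and bil: "bilinear_on (range r1) (range r2) BX"
    and bd: "bilin_bounded (range r1) (range r2) (qnorm r1) (qnorm r2) BX"
  shows "\<And>x y. L_ind BX r1 (r2 F) (x + y) = L_ind BX r1 (r2 F) x + L_ind BX r1 (r2 F) y"
    and "\<And>c x. L_ind BX r1 (r2 F) (scaleC c x) = c * L_ind BX r1 (r2 F) x"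
    and "\<exists>KH. \<forall>x. cmod (L_ind BX r1 (r2 F) x) \<le> KH * norm x"
proof -
  show "L_ind BX r1 (r2 F) (x + y) = L_ind BX r1 (r2 F) x + L_ind BX r1 (r2 F) y" for x y
    using lin bil unfolding L_ind_def clinear_def bilinear_on_def by auto
  show "L_ind BX r1 (r2 F) (scaleC c x) = c * L_ind BX r1 (r2 F) x" for c x
    using lin bil unfolding L_ind_def clinear_def bilinear_on_def by auto
  obtain K where K0: "K \<ge> 0" and K: "\<forall>u\<in>range r1. \<forall>v\<in>range r2. cmod (BX u v) \<le> K * qnorm r1 u * qnorm r2 v"
    using bilin_norm_props(3)[OF bd qnn] by blast
  have "cmod (L_ind BX r1 (r2 F) x) \<le> (K * norm F) * norm x" for x
  proof -
    have "cmod (L_ind BX r1 (r2 F) x) \<le> K * qnorm r1 (r1 x) * qnorm r2 (r2 F)"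
      using K by (simp add: L_ind_def)
    also have "\<dots> \<le> K * norm x * norm F"
      using K0 qnorm_le[where T=r1 and F=x] qnorm_le[where T=r2 and F=F]
        qnorm_nonneg[where T=r1 and F=x] qnorm_nonneg[where T=r2 and F=F] by (intro mult_mono) auto
    finally show ?thesis by (simp add: mult_ac)
  qed
  thus "\<exists>KH. \<forall>x. cmod (L_ind BX r1 (r2 F) x) \<le> KH * norm x" by blast
qed

lemma bound_bn:
  fixes B :: "'h1::real_normed_vector \<Rightarrow> 'h2::real_normed_vector \<Rightarrow> complex"
    and r1 :: "'h1 \<Rightarrow> 'c1" and r2 :: "'h2 \<Rightarrow> 'c2"
  assumes lam: "lam > 0" and is1: "\<And>v. lam * norm v \<le> (SUP w. cmod (B w v) / norm w)"
    and eq: "\<And>w. B w q = BX (r1 w) (r2 G)"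
    and bd: "bilin_bounded (range r1) (range r2) (qnorm r1) (qnorm r2) BX"
  shows "lam * norm q \<le> bilin_norm (range r1) (range r2) (qnorm r1) (qnorm r2) BX * norm G"
proof -
  have "lam * norm q \<le> norm G * bilin_norm (range r1) (range r2) (qnorm r1) (qnorm r2) BX"
    unfolding bilin_norm_def
  proof (rule inf_bound[OF bilin_norm_props(1)[OF bd qnn]])
    fix K assume "K \<in> {K. 0 \<le> K \<and> (\<forall>u\<in>range r1. \<forall>v\<in>range r2. cmod (BX u v) \<le> K * qnorm r1 u * qnorm r2 v)}"
    hence K0: "0 \<le> K" and K: "\<And>u v. cmod (BX (r1 u) (r2 v)) \<le> K * qnorm r1 (r1 u) * qnorm r2 (r2 v)"
      by auto
    have "(SUP w. cmod (B w q) / norm w) \<le> K * norm G"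
    proof (rule SUP_le_const)
      fix w
      show "cmod (B w q) / norm w \<le> K * norm G"
      proof (cases "w = 0")
        case True thus ?thesis using K0 by simp
      next
        case False
        have "cmod (B w q) \<le> K * qnorm r1 (r1 w) * qnorm r2 (r2 G)" using K eq by simp
        also have "\<dots> \<le> K * norm w * norm G"
          using K0 qnorm_le[where T=r1 and F=w] qnorm_le[where T=r2 and F=G]
            qnorm_nonneg[where T=r1 and F=w] qnorm_nonneg[where T=r2 and F=G] by (intro mult_mono) auto
        finally show ?thesis using False by (simp add: field_simps)
      qed
    qed
    thus "lam * norm q \<le> norm G * K" using is1[of q] by (simp add: mult.commute)
  qed auto
  thus ?thesis by (simp add: mult.commute)
qed

theorem lemma4p2:
  fixes B :: "'h1::chilbert_space \<Rightarrow> 'h2::chilbert_space \<Rightarrow> complex"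
    and BO :: "'o1::complex_vector \<Rightarrow> 'o2::complex_vector \<Rightarrow> complex"
    and BC :: "'c1::complex_vector \<Rightarrow> 'c2::complex_vector \<Rightarrow> complex"
    and rO1 :: "'h1 \<Rightarrow> 'o1" and rO2 :: "'h2 \<Rightarrow> 'o2"
    and rC1 :: "'h1 \<Rightarrow> 'c1" and rC2 :: "'h2 \<Rightarrow> 'c2"
    and Tr1 :: "'h1 \<Rightarrow> 'd1::complex_vector" and Tr2 :: "'h2 \<Rightarrow> 'd2::complex_vector"
    and NO1 :: "'o1 \<Rightarrow> real" and NO2 :: "'o2 \<Rightarrow> real"
    and NC1 :: "'c1 \<Rightarrow> real" and NC2 :: "'c2 \<Rightarrow> real"
    and ND1 :: "'d1 \<Rightarrow> real" and ND2 :: "'d2 \<Rightarrow> real"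
    and lam :: real
  assumes seminorms: "seminorm NO1" "seminorm NO2" "seminorm NC1" "seminorm NC2"
      "seminorm ND1" "seminorm ND2"
    and Tr_bdd: "bounded_clinear_into ND1 Tr1" "bounded_clinear_into ND2 Tr2"
    and rO_bdd: "bounded_clinear_into NO1 rO1" "bounded_clinear_into NO2 rO2"
    and rC_bdd: "bounded_clinear_into NC1 rC1" "bounded_clinear_into NC2 rC2"
    and B_bilin: "bilinear_on UNIV UNIV B" and B_bdd: "bilin_bounded UNIV UNIV norm norm B"
    and BO_bilin: "bilinear_on (range rO1) (range rO2) BO"
    and BO_bdd: "bilin_bounded (range rO1) (range rO2) (qnorm rO1) (qnorm rO2) BO"
    and BC_bilin: "bilinear_on (range rC1) (range rC2) BC"
    and BC_bdd: "bilin_bounded (range rC1) (range rC2) (qnorm rC1) (qnorm rC2) BC"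
    and lam_pos: "lam > 0"
    and infsup1: "\<And>v. lam * norm v \<le> (SUP w. cmod (B w v) / norm w)"
    and infsup2: "\<And>u. lam * norm u \<le> (SUP w. cmod (B u w) / norm w)"
    and split: "\<And>u v. B u v = BO (rO1 u) (rO2 v) + BC (rC1 u) (rC2 v)"
    and glue1: "\<And>\<phi> \<psi>. Tr1 \<phi> = Tr1 \<psi> \<Longrightarrow>
                  \<exists>w. rO1 w = rO1 \<phi> \<and> rC1 w = rC1 \<psi> \<and> Tr1 w = Tr1 \<phi>"
    and glue2: "\<And>\<phi> \<psi>. Tr2 \<phi> = Tr2 \<psi> \<Longrightarrow>
                  \<exists>w. rO2 w = rO2 \<phi> \<and> rC2 w = rC2 \<psi> \<and> Tr2 w = Tr2 \<phi>"
  shows "(\<forall>F G. Tr2 F = Tr2 G \<longrightarrow>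
            DB_rep B BO rO1 rO2 F = DB_rep B BO rO1 rO2 G \<and>
            DB_rep B BC rC1 rC2 F = DB_rep B BC rC1 rC2 G)
       \<and> (\<forall>f\<in>range Tr2. \<forall>F. Tr2 F = f \<longrightarrow>
            qnorm rO2 (DB_rep B BO rO1 rO2 F)
              \<le> bilin_norm (range rC1) (range rC2) (qnorm rC1) (qnorm rC2) BC / lam * qnorm Tr2 f)
       \<and> (\<forall>f\<in>range Tr2. \<forall>F. Tr2 F = f \<longrightarrow>
            qnorm rC2 (DB_rep B BC rC1 rC2 F)
              \<le> bilin_norm (range rO1) (range rO2) (qnorm rO1) (qnorm rO2) BO / lam * qnorm Tr2 f)
       \<and> (\<forall>g. in_dual (range Tr1) (qnorm Tr1) g \<longrightarrow>
            norm (single_layer B Tr1 g) \<le> dual_norm (range Tr1) (qnorm Tr1) g / lam)"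
proof -
  obtain KB where KB0: "KB \<ge> 0" and KB: "\<forall>u\<in>UNIV. \<forall>v\<in>UNIV. cmod (B u v) \<le> KB * norm u * norm v"
    using bilin_norm_props(3)[OF B_bdd] by (auto intro: mult_nonneg_nonneg)
  have np: "\<forall>\<phi>. B \<phi> (newton_pot B H) = H \<phi>"
    if aH: "\<And>x y. H (x+y) = H x + H y" and sH: "\<And>c x. H (scaleC c x) = c * H x"
      and bH: "\<exists>KH. \<forall>x. cmod (H x) \<le> KH * norm x" for H
  proof -
    obtain KH where KH: "\<And>x. cmod (H x) \<le> KH * norm x" using bH by blast
    obtain u where u: "\<forall>\<phi>. B \<phi> u = H \<phi>"
      using blm[OF B_bilin _ KB0 lam_pos infsup1 infsup2 aH sH KH] KB by auto
    have "newton_pot B H = u" unfolding newton_pot_def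
    proof (rule the_equality)
      show "\<forall>\<phi>. B \<phi> u = H \<phi>" by (rule u)
    next
      fix u' assume u': "\<forall>\<phi>. B \<phi> u' = H \<phi>"
      have "u' - u = 0"
        by (rule infsup_zero[OF lam_pos infsup1]) (simp add: bil_diff2[OF B_bilin] u u')
      thus "u' = u" by simp
    qed
    thus ?thesis using u by simp
  qed
  have linO1: "clinear rO1" and linO2: "clinear rO2" and linC1: "clinear rC1" and linC2: "clinear rC2"
    and linT1: "clinear Tr1"
    using rO_bdd rC_bdd Tr_bdd unfolding bounded_clinear_into_def by auto
  define P where "P F = newton_pot B (L_ind BO rO1 (rO2 F))" for F
  define Q where "Q F = newton_pot B (L_ind BC rC1 (rC2 F))" for F
  have Pspec: "B \<phi> (P F) = BO (rO1 \<phi>) (rO2 F)" for \<phi> F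
    using np[OF L_ind_props[OF linO1 BO_bilin BO_bdd, where F=F]] by (simp add: P_def L_ind_def)
  have Qspec: "B \<phi> (Q F) = BC (rC1 \<phi>) (rC2 F)" for \<phi> F
    using np[OF L_ind_props[OF linC1 BC_bilin BC_bdd, where F=F]] by (simp add: Q_def L_ind_def)
  have decomp: "F = P F + Q F" for F
  proof -
    have "F - (P F + Q F) = 0"
    proof (rule infsup_zero[OF lam_pos infsup1])
      fix w
      have "B w (P F + Q F) = B w (P F) + B w (Q F)"
        using B_bilin unfolding bilinear_on_def by auto
      thus "B w (F - (P F + Q F)) = 0" by (simp add: bil_diff2[OF B_bilin] Pspec Qspec split[of w F])
    qed
    thus ?thesis by simp
  qed
  have DO: "DB_rep B BO rO1 rO2 F = - rO2 (Q F)" for F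
  proof -
    have "rO2 F = rO2 (P F) + rO2 (Q F)" using decomp[of F] linO2 unfolding clinear_def by metis
    thus ?thesis unfolding DB_rep_def P_def[symmetric] by (simp add: algebra_simps)
  qed
  have DC: "DB_rep B BC rC1 rC2 F = - rC2 (P F)" for F
  proof -
    have "rC2 F = rC2 (P F) + rC2 (Q F)" using decomp[of F] linC2 unfolding clinear_def by metis
    thus ?thesis unfolding DB_rep_def Q_def[symmetric] by (simp add: algebra_simps)
  qed
  have wd: "DB_rep B BO rO1 rO2 F = DB_rep B BO rO1 rO2 G \<and> DB_rep B BC rC1 rC2 F = DB_rep B BC rC1 rC2 G"
    if tr: "Tr2 F = Tr2 G" for F G
  proof
    obtain W where W: "rO2 W = rO2 F" "rC2 W = rC2 G" using glue2[OF tr] by blast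
    have "DB_rep B BO rO1 rO2 F = DB_rep B BO rO1 rO2 W" unfolding DB_rep_def using W by simp
    also have "\<dots> = - rO2 (Q W)" by (rule DO)
    also have "\<dots> = - rO2 (Q G)" using W by (simp add: Q_def)
    also have "\<dots> = DB_rep B BO rO1 rO2 G" by (simp add: DO)
    finally show "DB_rep B BO rO1 rO2 F = DB_rep B BO rO1 rO2 G" .
  next
    obtain W where W: "rO2 W = rO2 G" "rC2 W = rC2 F" using glue2[OF tr[symmetric]] by blast
    have "DB_rep B BC rC1 rC2 F = DB_rep B BC rC1 rC2 W" unfolding DB_rep_def using W by simp
    also have "\<dots> = - rC2 (P W)" by (rule DC)
    also have "\<dots> = - rC2 (P G)" using W by (simp add: P_def)
    also have "\<dots> = DB_rep B BC rC1 rC2 G" by (simp add: DC)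
    finally show "DB_rep B BC rC1 rC2 F = DB_rep B BC rC1 rC2 G" .
  qed
  define bnC where "bnC = bilin_norm (range rC1) (range rC2) (qnorm rC1) (qnorm rC2) BC"
  define bnO where "bnO = bilin_norm (range rO1) (range rO2) (qnorm rO1) (qnorm rO2) BO"
  have bnC0: "bnC \<ge> 0" unfolding bnC_def by (rule bilin_norm_props(2)[OF BC_bdd qnn])
  have bnO0: "bnO \<ge> 0" unfolding bnO_def by (rule bilin_norm_props(2)[OF BO_bdd qnn])
  have Qb: "norm (Q G) \<le> bnC / lam * norm G" for G
  proof -
    have "lam * norm (Q G) \<le> bnC * norm G" unfolding bnC_def
      by (rule bound_bn[OF lam_pos infsup1 _ BC_bdd]) (rule Qspec)
    thus ?thesis using lam_pos by (simp add: field_simps)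
  qed
  have Pb: "norm (P G) \<le> bnO / lam * norm G" for G
  proof -
    have "lam * norm (P G) \<le> bnO * norm G" unfolding bnO_def
      by (rule bound_bn[OF lam_pos infsup1 _ BO_bdd]) (rule Pspec)
    thus ?thesis using lam_pos by (simp add: field_simps)
  qed
  have part2: "qnorm rO2 (DB_rep B BO rO1 rO2 F) \<le> bnC / lam * qnorm Tr2 f" if "Tr2 F = f" for F f
    unfolding qnorm_def[of Tr2]
  proof (rule inf_bound)
    show "{norm G |G. Tr2 G = f} \<noteq> {}" using that by blast
    show "0 \<le> bnC / lam" using bnC0 lam_pos by simp
    fix y assume "y \<in> {norm G |G. Tr2 G = f}"
    then obtain G where G: "Tr2 G = f" "y = norm G" by blast
    have "DB_rep B BO rO1 rO2 F = rO2 (- Q G)"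
      using wd[of F G] that G DO[of G] clinear_neg[OF linO2] by simp
    hence "qnorm rO2 (DB_rep B BO rO1 rO2 F) \<le> norm (Q G)" using qnorm_le[where T=rO2 and F="- Q G"] by simp
    thus "qnorm rO2 (DB_rep B BO rO1 rO2 F) \<le> bnC / lam * y" using Qb[of G] G by simp
  qed
  have part3: "qnorm rC2 (DB_rep B BC rC1 rC2 F) \<le> bnO / lam * qnorm Tr2 f" if "Tr2 F = f" for F f
    unfolding qnorm_def[of Tr2]
  proof (rule inf_bound)
    show "{norm G |G. Tr2 G = f} \<noteq> {}" using that by blast
    show "0 \<le> bnO / lam" using bnO0 lam_pos by simp
    fix y assume "y \<in> {norm G |G. Tr2 G = f}"
    then obtain G where G: "Tr2 G = f" "y = norm G" by blast
    have "DB_rep B BC rC1 rC2 F = rC2 (- P G)"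
      using wd[of F G] that G DC[of G] clinear_neg[OF linC2] by simp
    hence "qnorm rC2 (DB_rep B BC rC1 rC2 F) \<le> norm (P G)" using qnorm_le[where T=rC2 and F="- P G"] by simp
    thus "qnorm rC2 (DB_rep B BC rC1 rC2 F) \<le> bnO / lam * y" using Pb[of G] G by simp
  qed
  have part4: "norm (single_layer B Tr1 g) \<le> dual_norm (range Tr1) (qnorm Tr1) g / lam"
    if gd: "in_dual (range Tr1) (qnorm Tr1) g" for g
  proof -
    obtain Kg where Kg: "\<forall>x\<in>range Tr1. cmod (g x) \<le> Kg * qnorm Tr1 x"
      using gd unfolding in_dual_def by blast
    define KS where "KS = {K. 0 \<le> K \<and> (\<forall>x\<in>range Tr1. cmod (g x) \<le> K * qnorm Tr1 x)}"
    have "max Kg 0 \<in> KS"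
    proof -
      have "cmod (g x) \<le> max Kg 0 * qnorm Tr1 x" if "x \<in> range Tr1" for x
      proof -
        have "Kg * qnorm Tr1 x \<le> max Kg 0 * qnorm Tr1 x"
          using that qnorm_nonneg[where T=Tr1] by (intro mult_right_mono) auto
        moreover have "cmod (g x) \<le> Kg * qnorm Tr1 x" using Kg that by blast
        ultimately show ?thesis by linarith
      qed
      thus ?thesis by (simp add: KS_def)
    qed
    hence KSne: "KS \<noteq> {}" by blast
    have ga: "g (Tr1 (x + y)) = g (Tr1 x) + g (Tr1 y)" for x y
      using gd linT1 unfolding in_dual_def clinear_def by auto
    have gs: "g (Tr1 (scaleC c x)) = c * g (Tr1 x)" for c x
      using gd linT1 unfolding in_dual_def clinear_def by auto
    have gb: "\<exists>KH. \<forall>x. cmod (g (Tr1 x)) \<le> KH * norm x"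
    proof (intro exI allI)
      fix x
      have "cmod (g (Tr1 x)) \<le> max Kg 0 * qnorm Tr1 (Tr1 x)"
        using \<open>max Kg 0 \<in> KS\<close> by (auto simp: KS_def)
      also have "\<dots> \<le> max Kg 0 * norm x" using qnorm_le[where T=Tr1 and F=x] by (intro mult_left_mono) auto
      finally show "cmod (g (Tr1 x)) \<le> max Kg 0 * norm x" .
    qed
    have S: "B \<phi> (single_layer B Tr1 g) = g (Tr1 \<phi>)" for \<phi>
      using np[of "\<lambda>\<phi>. g (Tr1 \<phi>)", OF ga gs gb] by (simp add: single_layer_def)
    have "lam * norm (single_layer B Tr1 g) \<le> 1 * Inf KS"
    proof (rule inf_bound[OF KSne _ zero_le_one])
      fix K assume "K \<in> KS"
      hence K0: "0 \<le> K" and K: "\<And>x. cmod (g (Tr1 x)) \<le> K * qnorm Tr1 (Tr1 x)"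
        by (auto simp: KS_def)
      have "(SUP w. cmod (B w (single_layer B Tr1 g)) / norm w) \<le> K"
      proof (rule SUP_le_const)
        fix w
        show "cmod (B w (single_layer B Tr1 g)) / norm w \<le> K"
        proof (cases "w = 0")
          case True thus ?thesis using K0 by simp
        next
          case False
          have "cmod (B w (single_layer B Tr1 g)) \<le> K * qnorm Tr1 (Tr1 w)" using K S by simp
          also have "\<dots> \<le> K * norm w" using K0 qnorm_le[where T=Tr1 and F=w] by (intro mult_left_mono) auto
          finally show ?thesis using False by (simp add: field_simps)
        qed
      qed
      thus "lam * norm (single_layer B Tr1 g) \<le> 1 * K" using infsup1[of "single_layer B Tr1 g"] by linarith
    qed
    hence "lam * norm (single_layer B Tr1 g) \<le> dual_norm (range Tr1) (qnorm Tr1) g"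
      by (simp add: dual_norm_def KS_def)
    thus ?thesis using lam_pos by (simp add: field_simps)
  qed
  show ?thesis
    using wd part2 part3 part4 unfolding bnC_def bnO_def by blast
qed

end
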